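(* Let $\Delta\subseteq\{1,\dots,K\}$ and let $A=P_\Delta U^*UP_\Delta$ (as an operator on the range of $P_\Delta$). Suppose there are constants $0\le\alpha,\theta<1$ such that (a) $\|P_\Delta U^*UP_\Delta-P_\Delta\|\le\alpha$, and (b) $\|P_\Delta^\perp W^{-1}U^*UP_\Delta A^{-1}WP_\Delta\,\mathrm{sign}(x)\|_\infty\le\theta$. If $\hat x$ is a minimizer of $\min_{z\in\mathbb C^K}\|z\|_{1,w}$ subject to $\|UP_Kz-y\|\le\eta$, and $s=\sum_{i\in\Delta}(w_i)^2$, then $$\|\hat x-x\|\le2C_3\left(1+\frac{C_3+1}{1-\theta}\sqrt s\right)\eta+\frac{C_3+1}{1-\theta}\left(2\|P_\Delta^\perp x\|_{1,w}+\|x-\bar x\|_{1,w}\right),$$ where $\bar x\in\ell^1_w(\mathbb N)$ is any feasible point of that problem and $C_3=\frac{\sqrt{1+\alpha}}{1-\alpha}$.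
   Context: Setting: $D\subseteq\mathbb R^d$ a domain, $\nu\ge0$ integrable on $D$ with $\int_D\nu=1$, and $\{\phi_i\}_{i\in\mathbb N}\subseteq L^2_\nu(D)\cap L^\infty(D)$ orthonormal in $L^2_\nu(D)$. $T=\{t_n\}_{n=1}^N\subseteq\overline D$ with Voronoi cells $V_n=\{t\in D:|t-t_n|\le|t-t_m|\ \forall m\ne n\}$ and quadrature weights $\tau_n=\int_{V_n}\nu(t)\,dt$ (so $\sum_n\tau_n=1$). Positive weights $w_i\ge\|\phi_i\|_{L^\infty}$; $W=\mathrm{diag}(w_1,w_2,\dots)$; $\|z\|_{1,w}=\sum_iw_i|z_i|$. $U$ is the $N\times\infty$ matrix $U_{n,i}=\sqrt{\tau_n}\phi_i(t_n)$. The target is $f=\sum_ix_i\phi_i$ with $x\in\ell^1_w(\mathbb N)$; data $y=\{\sqrt{\tau_n}(f(t_n)+e_n)\}_{n=1}^N$ with $|e_n|\le\eta$. $P_\Delta$ is the coordinate projection onto $\Delta$, $P_\Delta^\perp=I-P_\Delta$, $P_K=P_{\{1,\dots,K\}}$; $\mathbb C^K$ is identified with sequences supported in $\{1,\dots,K\}$. $\|\cdot\|$ is the $\ell^2$ norm/operator norm, $\|\cdot\|_\infty$ the $\ell^\infty$ norm; $\mathrm{sign}$ is the entrywise complex sign with $\mathrm{sign}(0)=0$. Feasible means $\|UP_K\bar x-y\|\le\eta$. *)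

theory Defs
  imports "HOL-Analysis.Analysis"
begin

text \<open>Indices are 0-based: the paper's index i in {1,2,...} corresponds to i-1 here,
  so P_K is the projection onto {..<K} and the sample points are t 0, ..., t (N-1).\<close>

definition voronoi :: "'a::euclidean_space set \<Rightarrow> (nat \<Rightarrow> 'a) \<Rightarrow> nat \<Rightarrow> nat \<Rightarrow> 'a set" where
  "voronoi D t N n = {s \<in> D. \<forall>m<N. m \<noteq> n \<longrightarrow> norm (s - t n) \<le> norm (s - t m)}"

definition qweight :: "'a::euclidean_space set \<Rightarrow> ('a \<Rightarrow> real) \<Rightarrow> (nat \<Rightarrow> 'a) \<Rightarrow> nat \<Rightarrow> nat \<Rightarrow> real" where
  "qweight D \<nu> t N n = integral (voronoi D t N n) \<nu>"

definition Umat :: "(nat \<Rightarrow> real) \<Rightarrow> (nat \<Rightarrow> 'a \<Rightarrow> complex) \<Rightarrow> (nat \<Rightarrow> 'a) \<Rightarrow> nat \<Rightarrow> nat \<Rightarrow> complex" where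
  "Umat \<tau> \<phi> t n i = complex_of_real (sqrt (\<tau> n)) * \<phi> i (t n)"

definition UPK :: "(nat \<Rightarrow> nat \<Rightarrow> complex) \<Rightarrow> nat \<Rightarrow> (nat \<Rightarrow> complex) \<Rightarrow> nat \<Rightarrow> complex" where
  "UPK U K z n = (\<Sum>i<K. U n i * z i)"

definition vnorm :: "nat \<Rightarrow> (nat \<Rightarrow> complex) \<Rightarrow> real" where
  "vnorm N v = sqrt (\<Sum>n<N. (cmod (v n))\<^sup>2)"

definition l2norm :: "(nat \<Rightarrow> complex) \<Rightarrow> real" where
  "l2norm z = sqrt (\<Sum>i. (cmod (z i))\<^sup>2)"

definition wnorm :: "(nat \<Rightarrow> real) \<Rightarrow> (nat \<Rightarrow> complex) \<Rightarrow> real" where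
  "wnorm w z = (\<Sum>i. w i * cmod (z i))"

definition in_l1w :: "(nat \<Rightarrow> real) \<Rightarrow> (nat \<Rightarrow> complex) \<Rightarrow> bool" where
  "in_l1w w z \<longleftrightarrow> summable (\<lambda>i. w i * cmod (z i))"

definition UstarU_PD :: "(nat \<Rightarrow> nat \<Rightarrow> complex) \<Rightarrow> nat \<Rightarrow> nat set \<Rightarrow> (nat \<Rightarrow> complex) \<Rightarrow> nat \<Rightarrow> complex" where
  "UstarU_PD U N \<Delta> v i = (\<Sum>n<N. cnj (U n i) * (\<Sum>j\<in>\<Delta>. U n j * v j))"

definition Aop :: "(nat \<Rightarrow> nat \<Rightarrow> complex) \<Rightarrow> nat \<Rightarrow> nat set \<Rightarrow> (nat \<Rightarrow> complex) \<Rightarrow> nat \<Rightarrow> complex" where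
  "Aop U N \<Delta> v i = (if i \<in> \<Delta> then UstarU_PD U N \<Delta> v i else 0)"

definition Ainv :: "(nat \<Rightarrow> nat \<Rightarrow> complex) \<Rightarrow> nat \<Rightarrow> nat set \<Rightarrow> (nat \<Rightarrow> complex) \<Rightarrow> nat \<Rightarrow> complex" where
  "Ainv U N \<Delta> u = (THE v. (\<forall>i. i \<notin> \<Delta> \<longrightarrow> v i = 0) \<and> (\<forall>i\<in>\<Delta>. Aop U N \<Delta> v i = u i))"

end

theory Submission
  imports Defs
begin



lemma voronoi_closed:
  fixes t :: "nat \<Rightarrow> 'a::euclidean_space"
  shows "closed {s. \<forall>m<N. m \<noteq> n \<longrightarrow> norm (s - t n) \<le> norm (s - t m)}"
proof -
  have "{s. \<forall>m<N. m \<noteq> n \<longrightarrow> norm (s - t n) \<le> norm (s - t m)}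
        = (\<Inter>m\<in>{m. m<N \<and> m \<noteq> n}. {s. norm (s - t n) \<le> norm (s - t m)})" by auto
  also have "closed \<dots>"
    by (intro closed_INT ballI closed_Collect_le continuous_intros)
  finally show ?thesis .
qed

lemma tau_facts:
  fixes D :: "'a::euclidean_space set" and t :: "nat \<Rightarrow> 'a"
  assumes nn: "\<forall>s\<in>D. \<nu> s \<ge> 0" and int: "(\<nu> has_integral 1) D"
    and inj: "inj_on t {..<N}" and op: "open D"
  shows "\<forall>n. qweight D \<nu> t N n \<ge> 0" "(\<Sum>n<N. qweight D \<nu> t N n) \<le> 1"
proof -
  let ?V = "voronoi D t N"
  have Vsub: "?V n \<subseteq> D" for n by (auto simp: voronoi_def)
  have Veq: "?V n = D \<inter> {s. \<forall>m<N. m \<noteq> n \<longrightarrow> norm (s - t n) \<le> norm (s - t m)}" for n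
    by (auto simp: voronoi_def)
  have Vmeas: "?V n \<in> sets lebesgue" for n
  proof -
    have "D \<in> sets lebesgue" using op borel_open sets_completionI_sets sets_lborel by blast
    moreover have "{s. \<forall>m<N. m \<noteq> n \<longrightarrow> norm (s - t n) \<le> norm (s - t m)} \<in> sets lebesgue"
      using voronoi_closed[of N n t] borel_closed sets_completionI_sets sets_lborel by blast
    ultimately show ?thesis unfolding Veq by (rule sets.Int)
  qed
  have aD: "\<nu> absolutely_integrable_on D"
    using nonnegative_absolutely_integrable_1[of \<nu> D] int nn by blast
  have intV: "\<nu> integrable_on ?V n" for n
    using set_integrable_subset[OF aD Vmeas Vsub] set_lebesgue_integral_eq_integral(1) by blast
  show "\<forall>n. qweight D \<nu> t N n \<ge> 0"
    unfolding qweight_def using intV Vsub nn by (auto intro!: integral_nonneg)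
  define G where "G = (\<lambda>n s. if s \<in> ?V n then \<nu> s else 0)"
  have Gint: "(G n has_integral qweight D \<nu> t N n) D" for n
    unfolding G_def qweight_def
    by (subst has_integral_restrict[OF Vsub]) (rule integrable_integral[OF intV])
  have sumint: "((\<lambda>s. \<Sum>n<N. G n s) has_integral (\<Sum>n<N. qweight D \<nu> t N n)) D"
    using Gint by (intro has_integral_sum) auto
  define Z where "Z = (\<Union>n<N. \<Union>m\<in>{m. m<N \<and> m \<noteq> n}. {s. norm (s - t n) = norm (s - t m)})"
  have negH: "negligible {s. norm (s - t n) = norm (s - t m)}" if nm: "n < N" "m < N" "m \<noteq> n" for n m
  proof -
    have ne: "t n \<noteq> t m" using inj nm by (auto simp: inj_on_def)
    have "{s. norm (s - t n) = norm (s - t m)}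
          = {s. (2 *\<^sub>R (t m - t n)) \<bullet> s = t m \<bullet> t m - t n \<bullet> t n}"
    proof -
      have "norm (s - t n) = norm (s - t m) \<longleftrightarrow> (norm (s - t n))\<^sup>2 = (norm (s - t m))\<^sup>2" for s
        by (metis norm_ge_zero power2_eq_imp_eq)
      also have "\<dots> s \<longleftrightarrow> (2 *\<^sub>R (t m - t n)) \<bullet> s = t m \<bullet> t m - t n \<bullet> t n" for s
        by (simp add: power2_norm_eq_inner algebra_simps inner_commute)
      finally show ?thesis by auto
    qed
    moreover have "negligible {s. (2 *\<^sub>R (t m - t n)) \<bullet> s = t m \<bullet> t m - t n \<bullet> t n}"
      using ne by (intro negligible_hyperplane) auto
    ultimately show ?thesis by simp
  qed
  have negZ: "negligible Z"
    unfolding Z_def using negH by (auto intro!: negligible_Union)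
  have le: "(\<Sum>n<N. G n s) \<le> \<nu> s" if "s \<in> D - Z" for s
  proof -
    have uniq: "\<forall>a\<in>{n\<in>{..<N}. s \<in> ?V n}. \<forall>b\<in>{n\<in>{..<N}. s \<in> ?V n}. a = b"
    proof (intro ballI, rule ccontr)
      fix a b assume a: "a \<in> {n\<in>{..<N}. s \<in> ?V n}" and b: "b \<in> {n\<in>{..<N}. s \<in> ?V n}" and "a \<noteq> b"
      hence "norm (s - t a) = norm (s - t b)" by (auto simp: voronoi_def intro: antisym)
      hence "s \<in> Z" using a b \<open>a \<noteq> b\<close> unfolding Z_def by blast
      thus False using that by blast
    qed
    have card: "card {n\<in>{..<N}. s \<in> ?V n} \<le> 1"
      using card_le_Suc0_iff_eq[of "{n\<in>{..<N}. s \<in> ?V n}"] uniq by simp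
    have "(\<Sum>n<N. G n s) = (\<Sum>n\<in>{n\<in>{..<N}. s \<in> ?V n}. \<nu> s)"
      unfolding G_def by (simp add: sum.inter_filter[symmetric])
    also have "\<dots> = real (card {n\<in>{..<N}. s \<in> ?V n}) * \<nu> s" by simp
    also have "\<dots> \<le> 1 * \<nu> s" using card nn that
      by (intro mult_right_mono) auto
    finally show ?thesis by simp
  qed
  define G' where "G' = (\<lambda>s. if s \<in> Z then 0 else (\<Sum>n<N. G n s))"
  have i1: "(G' has_integral (\<Sum>n<N. qweight D \<nu> t N n)) D"
    using has_integral_spike[OF negZ _ sumint, of G'] unfolding G'_def by auto
  have le2: "G' s \<le> \<nu> s" if "s \<in> D" for s
    using le[of s] that nn unfolding G'_def by auto
  show "(\<Sum>n<N. qweight D \<nu> t N n) \<le> 1"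
    by (rule has_integral_le[OF i1 int le2])
qed


lemma w_ge1:
  fixes D :: "'a::euclidean_space set"
  assumes nn: "\<forall>s\<in>D. \<nu> s \<ge> 0" and int: "(\<nu> has_integral 1) D"
    and orth: "((\<lambda>s. complex_of_real (\<nu> s) * \<phi> s * cnj (\<phi> s)) has_integral 1) D"
    and sup: "\<forall>s\<in>closure D. cmod (\<phi> s) \<le> W" and Wp: "W > 0"
  shows "W \<ge> 1"
proof -
  have "((Re \<circ> (\<lambda>s. complex_of_real (\<nu> s) * \<phi> s * cnj (\<phi> s))) has_integral Re 1) D"
    by (rule has_integral_linear[OF orth bounded_linear_Re])
  moreover have "(Re \<circ> (\<lambda>s. complex_of_real (\<nu> s) * \<phi> s * cnj (\<phi> s))) = (\<lambda>s. \<nu> s * (cmod (\<phi> s))\<^sup>2)"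
  proof
    fix s
    have eq: "complex_of_real (\<nu> s) * \<phi> s * cnj (\<phi> s) = complex_of_real (\<nu> s * (cmod (\<phi> s))\<^sup>2)"
      by (simp only: of_real_mult complex_norm_square mult.assoc)
    show "(Re \<circ> (\<lambda>s. complex_of_real (\<nu> s) * \<phi> s * cnj (\<phi> s))) s = \<nu> s * (cmod (\<phi> s))\<^sup>2"
      by (simp only: comp_apply eq Re_complex_of_real)
  qed
  ultimately have i1: "((\<lambda>s. \<nu> s * (cmod (\<phi> s))\<^sup>2) has_integral 1) D" by simp
  have i2: "((\<lambda>s. \<nu> s * W\<^sup>2) has_integral (1 * W\<^sup>2)) D"
    using has_integral_mult_left[OF int] by blast
  have "\<nu> s * (cmod (\<phi> s))\<^sup>2 \<le> \<nu> s * W\<^sup>2" if "s \<in> D" for s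
  proof -
    have "cmod (\<phi> s) \<le> W" using sup that closure_subset by blast
    hence "(cmod (\<phi> s))\<^sup>2 \<le> W\<^sup>2" by (intro power_mono) auto
    thus ?thesis using nn that by (intro mult_left_mono) auto
  qed
  hence "1 \<le> 1 * W\<^sup>2" using has_integral_le[OF i1 i2] by blast
  thus ?thesis using Wp power2_le_imp_le[of 1 W] by simp
qed

definition Uv :: "(nat \<Rightarrow> nat \<Rightarrow> complex) \<Rightarrow> nat set \<Rightarrow> (nat \<Rightarrow> complex) \<Rightarrow> nat \<Rightarrow> complex" where
  "Uv U \<Delta> v n = (\<Sum>j\<in>\<Delta>. U n j * v j)"

definition nD :: "nat set \<Rightarrow> (nat \<Rightarrow> complex) \<Rightarrow> real" where
  "nD \<Delta> u = L2_set (\<lambda>i. cmod (u i)) \<Delta>"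

lemma vnorm_L2: "vnorm N v = L2_set (\<lambda>n. cmod (v n)) {..<N}"
  by (simp add: vnorm_def L2_set_def)

lemma vnorm_nD: "vnorm N v = nD {..<N} v"
  by (simp add: vnorm_L2 nD_def)

lemma nD_nonneg: "nD A u \<ge> 0" by (simp add: nD_def L2_set_nonneg)

lemma nD_add: "nD A (\<lambda>i. a i + b i) \<le> nD A a + nD A b"
proof -
  have "nD A (\<lambda>i. a i + b i) \<le> L2_set (\<lambda>i. cmod (a i) + cmod (b i)) A"
    unfolding nD_def by (intro L2_set_mono) (auto intro: norm_triangle_ineq)
  also have "\<dots> \<le> nD A a + nD A b" unfolding nD_def by (rule L2_set_triangle_ineq)
  finally show ?thesis .
qed

lemma nD_diff: "nD A (\<lambda>i. a i - b i) \<le> nD A a + nD A b"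
  using nD_add[of A a "\<lambda>i. - b i"] by (simp add: nD_def)

lemma nD_cong: "(\<And>i. i \<in> A \<Longrightarrow> a i = b i) \<Longrightarrow> nD A a = nD A b"
  unfolding nD_def by (intro L2_set_cong) auto

lemma nD_scale: "nD A (\<lambda>i. c * a i) = cmod c * nD A a"
  unfolding nD_def by (simp add: norm_mult L2_set_right_distrib)

lemma nD_sq: "(nD A a)\<^sup>2 = (\<Sum>i\<in>A. (cmod (a i))\<^sup>2)"
  unfolding nD_def L2_set_def by (simp add: sum_nonneg)

lemma cs_ineq: "cmod (\<Sum>i\<in>A. cnj (a i) * b i) \<le> nD A a * nD A b"
proof -
  have "cmod (\<Sum>i\<in>A. cnj (a i) * b i) \<le> (\<Sum>i\<in>A. cmod (cnj (a i) * b i))" by (rule norm_sum)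
  also have "\<dots> = (\<Sum>i\<in>A. \<bar>cmod (a i)\<bar> * \<bar>cmod (b i)\<bar>)" by (simp add: norm_mult)
  also have "\<dots> \<le> nD A a * nD A b" unfolding nD_def by (rule L2_set_mult_ineq)
  finally show ?thesis .
qed

lemma sum_cnj_self: "(\<Sum>i\<in>A. cnj (a i) * a i) = complex_of_real ((nD A a)\<^sup>2)"
  by (simp only: nD_sq of_real_sum complex_norm_square mult.commute)

lemma swap_ident:
  "(\<Sum>i\<in>\<Delta>. cnj (u i) * (\<Sum>n<N. cnj (U n i) * b n)) = (\<Sum>n<N. cnj (Uv U \<Delta> u n) * b n)"
  by (simp add: Uv_def sum_distrib_left sum_distrib_right sum.swap[of _ \<Delta>] mult_ac)

lemma swap_ident2:
  "(\<Sum>i\<in>\<Delta>. cnj (\<Sum>n<N. cnj (U n i) * b n) * u i) = (\<Sum>n<N. cnj (b n) * Uv U \<Delta> u n)"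
  by (simp add: Uv_def sum_distrib_left sum_distrib_right sum.swap[of _ \<Delta>] mult_ac)

lemma l2norm_fin:
  assumes "finite F" "\<And>i. i \<notin> F \<Longrightarrow> u i = 0"
  shows "l2norm u = nD F u"
  unfolding l2norm_def nD_def L2_set_def using assms by (subst suminf_finite[of F]) auto

lemma Aop_Uv: "Aop U N \<Delta> v i = (if i \<in> \<Delta> then (\<Sum>n<N. cnj (U n i) * Uv U \<Delta> v n) else 0)"
  by (simp add: Aop_def UstarU_PD_def Uv_def)

lemma UstarU_Uv: "UstarU_PD U N \<Delta> v i = (\<Sum>n<N. cnj (U n i) * Uv U \<Delta> v n)"
  by (simp add: UstarU_PD_def Uv_def)

lemma Aop_lin: "Aop U N \<Delta> v i = (if i \<in> \<Delta> then (\<Sum>j\<in>\<Delta>. (\<Sum>n<N. cnj (U n i) * U n j) * v j) else 0)"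
  by (simp add: Aop_def UstarU_PD_def sum_distrib_left sum_distrib_right sum.swap[of _ \<Delta>] mult_ac)




locale setting =
  fixes U :: "nat \<Rightarrow> nat \<Rightarrow> complex" and N :: nat and \<Delta> :: "nat set" and \<alpha> :: real
  assumes fin: "finite \<Delta>" and \<alpha>0: "0 \<le> \<alpha>" and \<alpha>1: "\<alpha> < 1"
    and CA: "\<forall>v. (\<forall>i. i \<notin> \<Delta> \<longrightarrow> v i = 0) \<longrightarrow>
                   l2norm (\<lambda>i. Aop U N \<Delta> v i - v i) \<le> \<alpha> * l2norm v"
begin

lemma CA': assumes "\<And>i. i \<notin> \<Delta> \<Longrightarrow> v i = 0"
  shows "nD \<Delta> (\<lambda>i. Aop U N \<Delta> v i - v i) \<le> \<alpha> * nD \<Delta> v"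
proof -
  have "l2norm (\<lambda>i. Aop U N \<Delta> v i - v i) = nD \<Delta> (\<lambda>i. Aop U N \<Delta> v i - v i)"
    using assms fin by (intro l2norm_fin) (auto simp: Aop_def)
  moreover have "l2norm v = nD \<Delta> v" using assms fin by (intro l2norm_fin) auto
  ultimately show ?thesis using CA assms by metis
qed

lemma K1a: assumes "\<And>i. i \<notin> \<Delta> \<Longrightarrow> v i = 0"
  shows "nD \<Delta> (Aop U N \<Delta> v) \<le> (1 + \<alpha>) * nD \<Delta> v"
proof -
  have "nD \<Delta> (Aop U N \<Delta> v) = nD \<Delta> (\<lambda>i. (Aop U N \<Delta> v i - v i) + v i)" by simp
  also have "\<dots> \<le> nD \<Delta> (\<lambda>i. Aop U N \<Delta> v i - v i) + nD \<Delta> v" by (rule nD_add)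
  also have "\<dots> \<le> (1 + \<alpha>) * nD \<Delta> v" using CA'[of v, OF assms] by (simp add: algebra_simps)
  finally show ?thesis .
qed

lemma K1b: assumes "\<And>i. i \<notin> \<Delta> \<Longrightarrow> v i = 0"
  shows "(1 - \<alpha>) * nD \<Delta> v \<le> nD \<Delta> (Aop U N \<Delta> v)"
proof -
  have "nD \<Delta> v = nD \<Delta> (\<lambda>i. Aop U N \<Delta> v i - (Aop U N \<Delta> v i - v i))" by simp
  also have "\<dots> \<le> nD \<Delta> (Aop U N \<Delta> v) + nD \<Delta> (\<lambda>i. Aop U N \<Delta> v i - v i)" by (rule nD_diff)
  finally show ?thesis using CA'[of v, OF assms] by (simp add: algebra_simps)
qed

lemma K2: assumes "\<And>i. i \<notin> \<Delta> \<Longrightarrow> v i = 0"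
  shows "vnorm N (Uv U \<Delta> v) \<le> sqrt (1 + \<alpha>) * nD \<Delta> v"
proof -
  have "complex_of_real ((nD {..<N} (Uv U \<Delta> v))\<^sup>2) = (\<Sum>n<N. cnj (Uv U \<Delta> v n) * Uv U \<Delta> v n)"
    by (simp only: sum_cnj_self)
  also have "\<dots> = (\<Sum>i\<in>\<Delta>. cnj (v i) * (\<Sum>n<N. cnj (U n i) * Uv U \<Delta> v n))"
    by (simp only: swap_ident)
  also have "\<dots> = (\<Sum>i\<in>\<Delta>. cnj (v i) * Aop U N \<Delta> v i)"
    by (intro sum.cong) (auto simp: Aop_Uv)
  finally have eqc: "complex_of_real ((nD {..<N} (Uv U \<Delta> v))\<^sup>2) = (\<Sum>i\<in>\<Delta>. cnj (v i) * Aop U N \<Delta> v i)" .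
  have "(nD {..<N} (Uv U \<Delta> v))\<^sup>2 = cmod (complex_of_real ((nD {..<N} (Uv U \<Delta> v))\<^sup>2))" by (simp del: of_real_power)
  also have "\<dots> = cmod (\<Sum>i\<in>\<Delta>. cnj (v i) * Aop U N \<Delta> v i)" by (simp only: eqc)
  also have "\<dots> \<le> nD \<Delta> v * nD \<Delta> (Aop U N \<Delta> v)" by (rule cs_ineq)
  also have "\<dots> \<le> nD \<Delta> v * ((1 + \<alpha>) * nD \<Delta> v)"
    using K1a[of v, OF assms] nD_nonneg by (intro mult_left_mono) auto
  also have "\<dots> = (sqrt (1 + \<alpha>) * nD \<Delta> v)\<^sup>2"
    using \<alpha>0 by (simp add: power_mult_distrib power2_eq_square)
  finally have sq: "(nD {..<N} (Uv U \<Delta> v))\<^sup>2 \<le> (sqrt (1 + \<alpha>) * nD \<Delta> v)\<^sup>2" .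
  have nn: "0 \<le> sqrt (1 + \<alpha>) * nD \<Delta> v" using \<alpha>0 nD_nonneg[of \<Delta> v] by simp
  have "nD {..<N} (Uv U \<Delta> v) \<le> sqrt (1 + \<alpha>) * nD \<Delta> v" by (rule power2_le_imp_le[OF sq nn])
  thus ?thesis by (simp only: vnorm_nD)
qed

lemma K3: "nD \<Delta> (\<lambda>i. if i \<in> \<Delta> then (\<Sum>n<N. cnj (U n i) * q n) else 0) \<le> sqrt (1 + \<alpha>) * vnorm N q"
proof -
  define z where "z = (\<lambda>i. if i \<in> \<Delta> then (\<Sum>n<N. cnj (U n i) * q n) else 0)"
  have zs: "\<And>i. i \<notin> \<Delta> \<Longrightarrow> z i = 0" by (simp add: z_def)
  have K2z: "vnorm N (Uv U \<Delta> z) \<le> sqrt (1 + \<alpha>) * nD \<Delta> z" by (rule K2) (rule zs)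
  have "complex_of_real ((nD \<Delta> z)\<^sup>2) = (\<Sum>i\<in>\<Delta>. cnj (z i) * z i)" by (simp only: sum_cnj_self)
  also have "\<dots> = (\<Sum>i\<in>\<Delta>. cnj (z i) * (\<Sum>n<N. cnj (U n i) * q n))"
    by (intro sum.cong) (auto simp: z_def)
  also have "\<dots> = (\<Sum>n<N. cnj (Uv U \<Delta> z n) * q n)" by (simp only: swap_ident)
  finally have eqc: "complex_of_real ((nD \<Delta> z)\<^sup>2) = (\<Sum>n<N. cnj (Uv U \<Delta> z n) * q n)" .
  have "(nD \<Delta> z)\<^sup>2 = cmod (complex_of_real ((nD \<Delta> z)\<^sup>2))" by (simp del: of_real_power)
  also have "\<dots> = cmod (\<Sum>n<N. cnj (Uv U \<Delta> z n) * q n)" by (simp only: eqc)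
  also have "\<dots> \<le> nD {..<N} (Uv U \<Delta> z) * nD {..<N} q" by (rule cs_ineq)
  also have "\<dots> \<le> (sqrt (1 + \<alpha>) * nD \<Delta> z) * vnorm N q"
    using K2z unfolding vnorm_nD by (intro mult_right_mono) (auto simp: nD_nonneg)
  finally have le: "nD \<Delta> z * nD \<Delta> z \<le> nD \<Delta> z * (sqrt (1 + \<alpha>) * vnorm N q)"
    by (simp add: power2_eq_square mult_ac)
  show ?thesis
  proof (cases "nD \<Delta> z = 0")
    case True thus ?thesis unfolding z_def[symmetric] using \<alpha>0
      by (simp add: vnorm_nD nD_nonneg)
  next
    case False
    hence "nD \<Delta> z > 0" using nD_nonneg[of \<Delta> z] by simp
    thus ?thesis using le unfolding z_def[symmetric] by simp
  qed
qed

lemma Aop_diff: "Aop U N \<Delta> (\<lambda>j. a j - b j) i = Aop U N \<Delta> a i - Aop U N \<Delta> b i"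
  by (simp add: Aop_lin sum_subtractf right_diff_distrib)

lemma K4: shows "(\<forall>i. i \<notin> \<Delta> \<longrightarrow> Ainv U N \<Delta> g i = 0) \<and> (\<forall>i\<in>\<Delta>. Aop U N \<Delta> (Ainv U N \<Delta> g) i = g i)"
proof -
  define E where "E = (\<lambda>u i. if i \<in> \<Delta> then u i - Aop U N \<Delta> u i else 0)"
  define g0 where "g0 = (\<lambda>i. if i \<in> \<Delta> then g i else 0)"
  define b where "b = (\<lambda>k. (E ^^ k) g0)"
  have bS: "b (Suc k) = E (b k)" for k by (simp add: b_def)
  have supp: "i \<notin> \<Delta> \<Longrightarrow> b k i = 0" for k i
    by (cases k) (auto simp: b_def g0_def E_def)
  have dec: "nD \<Delta> (b (Suc k)) \<le> \<alpha> * nD \<Delta> (b k)" for k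
  proof -
    have "nD \<Delta> (b (Suc k)) = nD \<Delta> (\<lambda>i. (-1) * (Aop U N \<Delta> (b k) i - b k i))"
      unfolding bS E_def by (intro nD_cong) auto
    also have "\<dots> = nD \<Delta> (\<lambda>i. Aop U N \<Delta> (b k) i - b k i)" by (simp only: nD_scale) simp
    also have "\<dots> \<le> \<alpha> * nD \<Delta> (b k)" using supp by (intro CA') auto
    finally show ?thesis .
  qed
  have geo: "nD \<Delta> (b k) \<le> \<alpha> ^ k * nD \<Delta> g0" for k
  proof (induction k)
    case 0 thus ?case by (simp add: b_def)
  next
    case (Suc k)
    have "nD \<Delta> (b (Suc k)) \<le> \<alpha> * nD \<Delta> (b k)" by (rule dec)
    also have "\<dots> \<le> \<alpha> * (\<alpha> ^ k * nD \<Delta> g0)" using Suc \<alpha>0 by (intro mult_left_mono)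
    finally show ?case by simp
  qed
  have comp: "cmod (b k i) \<le> \<alpha> ^ k * nD \<Delta> g0" for k i
  proof (cases "i \<in> \<Delta>")
    case True
    hence "cmod (b k i) \<le> nD \<Delta> (b k)" unfolding nD_def using fin by (rule_tac member_le_L2_set) auto
    thus ?thesis using geo[of k] by simp
  next
    case False thus ?thesis using supp \<alpha>0 nD_nonneg by simp
  qed
  have summ: "summable (\<lambda>k. b k i)" for i
    by (rule summable_comparison_test'[where g = "\<lambda>k. \<alpha> ^ k * nD \<Delta> g0"])
       (use comp \<alpha>0 \<alpha>1 in \<open>auto intro: summable_mult2 summable_geometric\<close>)
  define v where "v = (\<lambda>i. \<Sum>k. b k i)"
  have vs: "\<forall>i. i \<notin> \<Delta> \<longrightarrow> v i = 0" using supp by (simp add: v_def)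
  have vA: "\<forall>i\<in>\<Delta>. Aop U N \<Delta> v i = g i"
  proof
    fix i assume i: "i \<in> \<Delta>"
    have s1: "(\<lambda>k. Aop U N \<Delta> (b k) i) sums Aop U N \<Delta> v i"
      unfolding Aop_lin using i
      by (simp, intro sums_sum sums_mult) (auto simp: v_def summable_sums summ)
    have "Aop U N \<Delta> (b k) i = b k i - b (Suc k) i" for k
      using i by (simp add: bS E_def)
    hence s2: "(\<lambda>k. Aop U N \<Delta> (b k) i) sums (b 0 i - 0)"
      using telescope_sums'[OF summable_LIMSEQ_zero[OF summ[of i]]] by simp
    from sums_unique2[OF s1 s2] show "Aop U N \<Delta> v i = g i" using i by (simp add: b_def g0_def)
  qed
  have uniq: "v' = v" if v's: "\<forall>i. i \<notin> \<Delta> \<longrightarrow> v' i = 0" and v'A: "\<forall>i\<in>\<Delta>. Aop U N \<Delta> v' i = g i" for v'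
  proof -
    define d where "d = (\<lambda>i. v' i - v i)"
    have ds: "\<And>i. i \<notin> \<Delta> \<Longrightarrow> d i = 0" using vs v's by (simp add: d_def)
    have dA: "Aop U N \<Delta> d i = 0" for i
      using vA v'A unfolding d_def Aop_diff by (cases "i \<in> \<Delta>") (auto simp: Aop_def)
    have "nD \<Delta> d = nD \<Delta> (\<lambda>i. (-1) * (Aop U N \<Delta> d i - d i))" by (intro nD_cong) (simp add: dA)
    also have "\<dots> = nD \<Delta> (\<lambda>i. Aop U N \<Delta> d i - d i)" by (simp only: nD_scale) simp
    also have "\<dots> \<le> \<alpha> * nD \<Delta> d" by (rule CA'[OF ds])
    finally have "(1 - \<alpha>) * nD \<Delta> d \<le> 0" by (simp add: algebra_simps)
    hence "nD \<Delta> d \<le> 0" using \<alpha>1 by (simp add: mult_le_0_iff)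
    hence "nD \<Delta> d = 0" using nD_nonneg[of \<Delta> d] by linarith
    hence "\<forall>i\<in>\<Delta>. d i = 0" unfolding nD_def using fin by (simp add: L2_set_eq_0_iff)
    with ds show ?thesis unfolding d_def by (auto simp: fun_eq_iff)
  qed
  have "Ainv U N \<Delta> g = v"
    unfolding Ainv_def
  proof (rule the_equality)
    show "(\<forall>i. i \<notin> \<Delta> \<longrightarrow> v i = 0) \<and> (\<forall>i\<in>\<Delta>. Aop U N \<Delta> v i = g i)" using vs vA by blast
  next
    fix v' assume "(\<forall>i. i \<notin> \<Delta> \<longrightarrow> v' i = 0) \<and> (\<forall>i\<in>\<Delta>. Aop U N \<Delta> v' i = g i)"
    thus "v' = v" using uniq by blast
  qed
  thus ?thesis using vs vA by simp
qed

end



lemma vnorm_weighted: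
  assumes "\<forall>n<N. 0 \<le> \<tau> n" "sum \<tau> {..<N} \<le> 1" "\<forall>n<N. cmod (z n) \<le> B" "0 \<le> B"
  shows "vnorm N (\<lambda>n. complex_of_real (sqrt (\<tau> n)) * z n) \<le> B"
proof -
  have "(\<Sum>n<N. (cmod (complex_of_real (sqrt (\<tau> n)) * z n))\<^sup>2) = (\<Sum>n<N. \<tau> n * (cmod (z n))\<^sup>2)"
    using assms(1) by (intro sum.cong) (auto simp: norm_mult power_mult_distrib)
  also have "\<dots> \<le> (\<Sum>n<N. \<tau> n * B\<^sup>2)"
    using assms by (intro sum_mono mult_left_mono power_mono) auto
  also have "\<dots> = B\<^sup>2 * sum \<tau> {..<N}" by (simp add: sum_distrib_right mult.commute)
  also have "\<dots> \<le> B\<^sup>2 * 1" using assms(2) by (intro mult_left_mono) auto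
  finally have "(\<Sum>n<N. (cmod (complex_of_real (sqrt (\<tau> n)) * z n))\<^sup>2) \<le> B\<^sup>2" by simp
  hence "sqrt (\<Sum>n<N. (cmod (complex_of_real (sqrt (\<tau> n)) * z n))\<^sup>2) \<le> sqrt (B\<^sup>2)"
    by (rule real_sqrt_le_mono)
  thus ?thesis using assms(4) by (simp add: vnorm_def)
qed

lemma vnorm_sum: "finite I \<Longrightarrow> vnorm N (\<lambda>n. \<Sum>i\<in>I. F i n) \<le> (\<Sum>i\<in>I. vnorm N (F i))"
proof (induction I rule: finite_induct)
  case empty thus ?case by (simp add: vnorm_def)
next
  case (insert a I)
  have "vnorm N (\<lambda>n. \<Sum>i\<in>insert a I. F i n) = vnorm N (\<lambda>n. F a n + (\<Sum>i\<in>I. F i n))"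
    using insert by simp
  also have "\<dots> \<le> vnorm N (F a) + vnorm N (\<lambda>n. \<Sum>i\<in>I. F i n)"
    unfolding vnorm_nD by (rule nD_add)
  also have "\<dots> \<le> vnorm N (F a) + (\<Sum>i\<in>I. vnorm N (F i))" using insert by simp
  finally show ?case using insert by simp
qed

lemma vnorm_tendsto:
  assumes "\<And>n. (\<lambda>M. S M n) \<longlonglongrightarrow> p n"
  shows "(\<lambda>M. vnorm N (S M)) \<longlonglongrightarrow> vnorm N p"
  unfolding vnorm_def by (intro tendsto_intros assms)

lemma cnj_sgn_mult: "cnj (sgn z) * z = complex_of_real (cmod z)"
proof (cases "z = 0")
  case True thus ?thesis by simp
next
  case False
  have "cnj (sgn z) * z = cnj z * z / complex_of_real (cmod z)"
    by (simp add: sgn_div_norm scaleR_conv_of_real divide_inverse mult_ac)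
  also have "cnj z * z = complex_of_real ((cmod z)\<^sup>2)"
    by (simp only: complex_norm_square mult.commute)
  also have "complex_of_real ((cmod z)\<^sup>2) / complex_of_real (cmod z) = complex_of_real (cmod z)"
    using False by (simp add: power2_eq_square)
  finally show ?thesis .
qed

lemma term_le_suminf:
  fixes f :: "nat \<Rightarrow> real"
  assumes "summable f" "\<And>n. 0 \<le> f n" shows "f i \<le> suminf f"
  using sum_le_suminf[OF assms(1), of "{i}"] assms(2) by simp





theorem lemma5p2:
  fixes D :: "'a::euclidean_space set"
    and \<nu> :: "'a \<Rightarrow> real"
    and \<phi> :: "nat \<Rightarrow> 'a \<Rightarrow> complex"
    and t :: "nat \<Rightarrow> 'a"
    and N K :: nat
    and w :: "nat \<Rightarrow> real"
    and x xhat xbar e :: "nat \<Rightarrow> complex"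
    and f :: "'a \<Rightarrow> complex"
    and \<eta> \<alpha> \<theta> :: real
    and \<Delta> :: "nat set"
  defines "\<tau> \<equiv> qweight D \<nu> t N"
  defines "U \<equiv> Umat \<tau> \<phi> t"
  defines "y \<equiv> (\<lambda>n. complex_of_real (sqrt (\<tau> n)) * (f (t n) + e n))"
  assumes D_domain: "open D" "connected D"
    and \<nu>_nonneg: "\<forall>s\<in>D. \<nu> s \<ge> 0"
    and \<nu>_int: "(\<nu> has_integral 1) D"
    and \<phi>_orthonormal: "\<forall>i j. ((\<lambda>s. complex_of_real (\<nu> s) * \<phi> i s * cnj (\<phi> j s))
                               has_integral (if i = j then 1 else 0)) D"
    and t_in: "\<forall>n<N. t n \<in> closure D"
    and t_distinct: "inj_on t {..<N}"
    and w_pos: "\<forall>i. w i > 0"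
    and w_sup: "\<forall>i. \<forall>s\<in>closure D. cmod (\<phi> i s) \<le> w i"
    and x_l1w: "in_l1w w x"
    and f_def: "\<forall>s\<in>closure D. (\<lambda>i. x i * \<phi> i s) sums f s"
    and noise: "\<forall>n<N. cmod (e n) \<le> \<eta>"
    and \<Delta>_sub: "\<Delta> \<subseteq> {..<K}"
    and \<alpha>: "0 \<le> \<alpha>" "\<alpha> < 1"
    and \<theta>: "0 \<le> \<theta>" "\<theta> < 1"
    and cond_a: "\<forall>v. (\<forall>i. i \<notin> \<Delta> \<longrightarrow> v i = 0) \<longrightarrow>
                   l2norm (\<lambda>i. Aop U N \<Delta> v i - v i) \<le> \<alpha> * l2norm v"
    and cond_b: "\<forall>i. i \<notin> \<Delta> \<longrightarrow>
                   cmod (UstarU_PD U N \<Delta>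
                      (Ainv U N \<Delta> (\<lambda>j. if j \<in> \<Delta> then complex_of_real (w j) * sgn (x j) else 0)) i)
                   / w i \<le> \<theta>"
    and xhat_supp: "\<forall>i. i \<ge> K \<longrightarrow> xhat i = 0"
    and xhat_feas: "vnorm N (\<lambda>n. UPK U K xhat n - y n) \<le> \<eta>"
    and xhat_min: "\<forall>z. (\<forall>i. i \<ge> K \<longrightarrow> z i = 0) \<longrightarrow> vnorm N (\<lambda>n. UPK U K z n - y n) \<le> \<eta>
                     \<longrightarrow> wnorm w xhat \<le> wnorm w z"
    and xbar_l1w: "in_l1w w xbar"
    and xbar_feas: "vnorm N (\<lambda>n. UPK U K xbar n - y n) \<le> \<eta>"
  shows "l2norm (\<lambda>i. xhat i - x i)
         \<le> 2 * (sqrt (1 + \<alpha>) / (1 - \<alpha>))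
             * (1 + (sqrt (1 + \<alpha>) / (1 - \<alpha>) + 1) / (1 - \<theta>) * sqrt (\<Sum>i\<in>\<Delta>. (w i)\<^sup>2)) * \<eta>
           + (sqrt (1 + \<alpha>) / (1 - \<alpha>) + 1) / (1 - \<theta>)
             * (2 * wnorm w (\<lambda>i. if i \<in> \<Delta> then 0 else x i) + wnorm w (\<lambda>i. x i - xbar i))"
proof -
  have w0: "0 \<le> w i" for i using w_pos[rule_format, of i] by simp
  have fin: "finite \<Delta>" using \<Delta>_sub finite_subset by blast
  interpret S: setting U N \<Delta> \<alpha> using fin \<alpha> cond_a by unfold_locales auto
  have \<tau>0: "\<forall>n. 0 \<le> \<tau> n" and \<tau>1: "sum \<tau> {..<N} \<le> 1"
    using tau_facts[OF \<nu>_nonneg \<nu>_int t_distinct D_domain(1)] unfolding \<tau>_def by auto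
  have w1: "1 \<le> w i" for i
  proof -
    have o: "((\<lambda>s. complex_of_real (\<nu> s) * \<phi> i s * cnj (\<phi> i s)) has_integral 1) D"
      using \<phi>_orthonormal[rule_format, of i i] by simp
    show ?thesis by (rule w_ge1[OF \<nu>_nonneg \<nu>_int o]) (use w_sup w_pos in auto)
  qed
  have "0 \<le> vnorm N (\<lambda>n. UPK U K xhat n - y n)" unfolding vnorm_nD by (rule nD_nonneg)
  hence \<eta>0: "0 \<le> \<eta>" using xhat_feas by linarith
  have Ucol: "vnorm N (\<lambda>n. U n i) \<le> w i" for i
  proof -
    have "vnorm N (\<lambda>n. complex_of_real (sqrt (\<tau> n)) * \<phi> i (t n)) \<le> w i"
      using \<tau>0 \<tau>1 w_sup t_in w_pos[rule_format, of i] by (intro vnorm_weighted) auto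
    thus ?thesis by (simp add: U_def Umat_def)
  qed
  have Ubd: "cmod (U n i) \<le> w i" if "n < N" for n i
  proof -
    have "cmod (U n i) \<le> vnorm N (\<lambda>n. U n i)"
      unfolding vnorm_L2 using that by (intro member_le_L2_set) auto
    thus ?thesis using Ucol[of i] by simp
  qed
  define h where "h = (\<lambda>i. xhat i - x i)"
  define q where "q = (\<lambda>n. (UPK U K xhat n - y n) + complex_of_real (sqrt (\<tau> n)) * e n)"
  have qn: "vnorm N q \<le> 2 * \<eta>"
  proof -
    have "vnorm N (\<lambda>n. complex_of_real (sqrt (\<tau> n)) * e n) \<le> \<eta>"
      using \<tau>0 \<tau>1 noise \<eta>0 by (intro vnorm_weighted) auto
    moreover have "vnorm N q \<le> vnorm N (\<lambda>n. UPK U K xhat n - y n) + vnorm N (\<lambda>n. complex_of_real (sqrt (\<tau> n)) * e n)"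
      unfolding q_def vnorm_nD by (rule nD_add)
    ultimately show ?thesis using xhat_feas by linarith
  qed
  have xs: "summable (\<lambda>i. w i * cmod (x i))" using x_l1w by (simp add: in_l1w_def)
  have xbs: "summable (\<lambda>i. w i * cmod (xbar i))" using xbar_l1w by (simp add: in_l1w_def)
  have xhs: "summable (\<lambda>i. w i * cmod (xhat i))"
    by (rule summable_finite[of "{..<K}"]) (use xhat_supp in auto)
  have hs: "summable (\<lambda>i. w i * cmod (h i))"
  proof (rule summable_comparison_test[OF _ summable_add[OF xhs xs]])
    show "\<exists>N. \<forall>n\<ge>N. norm (w n * cmod (h n)) \<le> w n * cmod (xhat n) + w n * cmod (x n)"
    proof (intro exI allI impI)
      fix n :: nat
      have "cmod (h n) \<le> cmod (xhat n) + cmod (x n)" unfolding h_def by (rule norm_triangle_ineq4)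
      hence "w n * cmod (h n) \<le> w n * (cmod (xhat n) + cmod (x n))"
        using w_pos by (intro mult_left_mono) (auto simp: less_imp_le)
      thus "norm (w n * cmod (h n)) \<le> w n * cmod (xhat n) + w n * cmod (x n)"
        using w_pos[rule_format, of n] by (simp add: distrib_left)
    qed
  qed
  have hser: "(\<lambda>i. U n i * h i) sums q n" if "n < N" for n
  proof -
    have s1: "(\<lambda>i. U n i * xhat i) sums UPK U K xhat n"
      unfolding UPK_def by (rule sums_finite) (use xhat_supp in auto)
    have "(\<lambda>i. complex_of_real (sqrt (\<tau> n)) * (x i * \<phi> i (t n))) sums (complex_of_real (sqrt (\<tau> n)) * f (t n))"
      using f_def t_in that by (intro sums_mult) auto
    hence s2: "(\<lambda>i. U n i * x i) sums (complex_of_real (sqrt (\<tau> n)) * f (t n))"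
      by (simp add: U_def Umat_def mult_ac)
    have "(\<lambda>i. U n i * xhat i - U n i * x i) sums (UPK U K xhat n - complex_of_real (sqrt (\<tau> n)) * f (t n))"
      by (rule sums_diff[OF s1 s2])
    moreover have "UPK U K xhat n - complex_of_real (sqrt (\<tau> n)) * f (t n) = q n"
      by (simp add: q_def y_def algebra_simps)
    ultimately show ?thesis by (simp add: h_def right_diff_distrib)
  qed
  define hP where "hP = (\<lambda>i. if i \<in> \<Delta> then 0 else h i)"
  define T where "T = wnorm w hP"
  have hPs: "summable (\<lambda>i. w i * cmod (hP i))"
    by (rule summable_comparison_test[OF _ hs]) (use w0 in \<open>auto simp: hP_def\<close>)
  have T0: "0 \<le> T" unfolding T_def wnorm_def using w0 by (intro suminf_nonneg hPs) auto
  have hPle: "w i * cmod (hP i) \<le> T" for i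
    unfolding T_def wnorm_def by (rule term_le_suminf[OF hPs]) (use w0 in auto)
  define p where "p = (\<lambda>n. \<Sum>i. U n i * hP i)"
  have pser: "(\<lambda>i. U n i * hP i) sums p n" if "n < N" for n
  proof -
    have "summable (\<lambda>i. norm (U n i * hP i))"
    proof (rule summable_comparison_test[OF _ hPs])
      show "\<exists>N. \<forall>m\<ge>N. norm (norm (U n m * hP m)) \<le> w m * cmod (hP m)"
      proof (intro exI allI impI)
        fix m :: nat
        have "cmod (U n m) * cmod (hP m) \<le> w m * cmod (hP m)"
          by (rule mult_right_mono[OF Ubd[OF that]]) simp
        thus "norm (norm (U n m * hP m)) \<le> w m * cmod (hP m)" by (simp add: norm_mult)
      qed
    qed
    thus ?thesis unfolding p_def by (rule summable_sums[OF summable_norm_cancel])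
  qed
  have Uvh: "Uv U \<Delta> h n = q n - p n" if "n < N" for n
  proof -
    have "(\<lambda>i. U n i * h i - U n i * hP i) sums (q n - p n)"
      by (rule sums_diff[OF hser[OF that] pser[OF that]])
    moreover have "(\<lambda>i. U n i * h i - U n i * hP i) = (\<lambda>i. if i \<in> \<Delta> then U n i * h i else 0)"
      by (auto simp: hP_def)
    ultimately have a: "(\<lambda>i. if i \<in> \<Delta> then U n i * h i else 0) sums (q n - p n)" by simp
    have b: "(\<lambda>i. if i \<in> \<Delta> then U n i * h i else 0) sums (\<Sum>i\<in>\<Delta>. if i \<in> \<Delta> then U n i * h i else 0)"
      by (rule sums_finite[OF fin]) auto
    have "q n - p n = (\<Sum>i\<in>\<Delta>. if i \<in> \<Delta> then U n i * h i else 0)" by (rule sums_unique2[OF a b])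
    thus ?thesis by (simp add: Uv_def)
  qed
  define Sp where "Sp = (\<lambda>M n. \<Sum>i<M. U n i * hP i)"
  have Sp_lim: "(\<lambda>M. Sp M n) \<longlonglongrightarrow> p n" if "n < N" for n
    using pser[OF that] unfolding sums_def Sp_def .
  have pn: "vnorm N p \<le> T"
  proof -
    have "(\<lambda>M. vnorm N (Sp M)) \<longlonglongrightarrow> vnorm N p"
      unfolding vnorm_def by (intro tendsto_intros Sp_lim) auto
    moreover have "vnorm N (Sp M) \<le> T" for M
    proof -
      have "vnorm N (Sp M) \<le> (\<Sum>i<M. vnorm N (\<lambda>n. U n i * hP i))"
        unfolding Sp_def by (rule vnorm_sum) auto
      also have "\<dots> \<le> (\<Sum>i<M. w i * cmod (hP i))"
      proof (rule sum_mono)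
        fix i
        have "vnorm N (\<lambda>n. U n i * hP i) = cmod (hP i) * vnorm N (\<lambda>n. U n i)"
          unfolding vnorm_nD using nD_scale[of "{..<N}" "hP i" "\<lambda>n. U n i"] by (simp add: mult.commute)
        also have "\<dots> \<le> cmod (hP i) * w i" using Ucol by (intro mult_left_mono) auto
        finally show "vnorm N (\<lambda>n. U n i * hP i) \<le> w i * cmod (hP i)" by (simp add: mult.commute)
      qed
      also have "\<dots> \<le> T" unfolding T_def wnorm_def
        by (rule sum_le_suminf[OF hPs]) (use w0 in auto)
      finally show ?thesis .
    qed
    ultimately show ?thesis by (intro LIMSEQ_le_const2[of "\<lambda>M. vnorm N (Sp M)"]) auto
  qed
  define g where "g = (\<lambda>j. if j \<in> \<Delta> then complex_of_real (w j) * sgn (x j) else 0)"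
  define vv where "vv = Ainv U N \<Delta> g"
  have vvs: "\<And>i. i \<notin> \<Delta> \<Longrightarrow> vv i = 0" and vvA: "\<And>i. i \<in> \<Delta> \<Longrightarrow> Aop U N \<Delta> vv i = g i"
    using S.K4[of g] unfolding vv_def by auto
  define b where "b = Uv U \<Delta> vv"
  define \<xi> where "\<xi> = (\<lambda>i. \<Sum>n<N. cnj (U n i) * b n)"
  have \<xi>D: "\<xi> i = g i" if "i \<in> \<Delta>" for i
    using vvA[OF that] that by (simp add: \<xi>_def b_def Aop_Uv)
  have \<xi>O: "cmod (\<xi> i) \<le> \<theta> * w i" if "i \<notin> \<Delta>" for i
  proof -
    have "cmod (\<xi> i) / w i \<le> \<theta>" using cond_b that unfolding \<xi>_def b_def g_def vv_def UstarU_Uv by blast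
    thus ?thesis using w_pos[rule_format, of i] by (simp add: divide_le_eq mult.commute)
  qed
  define C3 where "C3 = sqrt (1 + \<alpha>) / (1 - \<alpha>)"
  define s where "s = (\<Sum>i\<in>\<Delta>. (w i)\<^sup>2)"
  have C30: "0 \<le> C3" unfolding C3_def using \<alpha> by simp
  have s0: "0 \<le> s" unfolding s_def by (simp add: sum_nonneg)
  have gn: "nD \<Delta> g \<le> sqrt s"
  proof -
    have "(nD \<Delta> g)\<^sup>2 \<le> s"
      unfolding nD_sq s_def
    proof (rule sum_mono)
      fix i assume "i \<in> \<Delta>"
      have "cmod (g i) \<le> w i" using \<open>i \<in> \<Delta>\<close> w0[of i]
        by (auto simp: g_def norm_mult norm_sgn intro: mult_left_le)
      thus "(cmod (g i))\<^sup>2 \<le> (w i)\<^sup>2" by (intro power_mono) auto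
    qed
    thus ?thesis using nD_nonneg real_le_rsqrt by blast
  qed
  have vvn: "nD \<Delta> vv \<le> nD \<Delta> g / (1 - \<alpha>)"
  proof -
    have "(1 - \<alpha>) * nD \<Delta> vv \<le> nD \<Delta> (Aop U N \<Delta> vv)" by (rule S.K1b) (rule vvs)
    also have "nD \<Delta> (Aop U N \<Delta> vv) = nD \<Delta> g" by (rule nD_cong) (rule vvA)
    finally show ?thesis using \<alpha> by (simp add: pos_le_divide_eq mult.commute)
  qed
  have bn: "vnorm N b \<le> C3 * sqrt s"
  proof -
    have "vnorm N b \<le> sqrt (1 + \<alpha>) * nD \<Delta> vv" unfolding b_def by (rule S.K2) (rule vvs)
    also have "\<dots> \<le> sqrt (1 + \<alpha>) * (nD \<Delta> g / (1 - \<alpha>))" using \<alpha> by (intro mult_left_mono vvn) simp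
    also have "\<dots> \<le> sqrt (1 + \<alpha>) * (sqrt s / (1 - \<alpha>))"
      using \<alpha> gn by (intro mult_left_mono divide_right_mono) auto
    also have "\<dots> = C3 * sqrt s" by (simp add: C3_def)
    finally show ?thesis .
  qed
  define Ip where "Ip = (\<Sum>i\<in>\<Delta>. cnj (g i) * h i)"
  have Ip_eq: "Ip = (\<Sum>n<N. cnj (b n) * q n) - (\<Sum>n<N. cnj (b n) * p n)"
  proof -
    have "Ip = (\<Sum>i\<in>\<Delta>. cnj (\<xi> i) * h i)" unfolding Ip_def by (intro sum.cong) (auto simp: \<xi>D)
    also have "\<dots> = (\<Sum>n<N. cnj (b n) * Uv U \<Delta> h n)" unfolding \<xi>_def by (rule swap_ident2)
    also have "\<dots> = (\<Sum>n<N. cnj (b n) * q n - cnj (b n) * p n)"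
      by (intro sum.cong) (auto simp: Uvh right_diff_distrib)
    finally show ?thesis by (simp add: sum_subtractf)
  qed
  have Iq: "cmod (\<Sum>n<N. cnj (b n) * q n) \<le> C3 * sqrt s * (2 * \<eta>)"
  proof -
    have "cmod (\<Sum>n<N. cnj (b n) * q n) \<le> vnorm N b * vnorm N q"
      unfolding vnorm_nD by (rule cs_ineq)
    also have "\<dots> \<le> C3 * sqrt s * (2 * \<eta>)"
      using bn qn C30 s0 by (intro mult_mono) (auto simp: vnorm_nD nD_nonneg)
    finally show ?thesis .
  qed
  have Ipn: "cmod (\<Sum>n<N. cnj (b n) * p n) \<le> \<theta> * T"
  proof -
    have "(\<lambda>M. \<Sum>n<N. cnj (b n) * Sp M n) \<longlonglongrightarrow> (\<Sum>n<N. cnj (b n) * p n)"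
      by (intro tendsto_intros Sp_lim) auto
    hence lim: "(\<lambda>M. cmod (\<Sum>n<N. cnj (b n) * Sp M n)) \<longlonglongrightarrow> cmod (\<Sum>n<N. cnj (b n) * p n)"
      by (rule tendsto_norm)
    have "cmod (\<Sum>n<N. cnj (b n) * Sp M n) \<le> \<theta> * T" for M
    proof -
      have "(\<Sum>n<N. cnj (b n) * Sp M n) = (\<Sum>i<M. cnj (\<xi> i) * hP i)"
        unfolding Sp_def \<xi>_def
        by (simp add: sum_distrib_left sum_distrib_right sum.swap[of _ "{..<N}"] mult_ac)
      also have "cmod \<dots> \<le> (\<Sum>i<M. cmod (\<xi> i) * cmod (hP i))"
        by (rule order_trans[OF norm_sum]) (simp add: norm_mult)
      also have "\<dots> \<le> (\<Sum>i<M. \<theta> * (w i * cmod (hP i)))"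
      proof (rule sum_mono)
        fix i
        show "cmod (\<xi> i) * cmod (hP i) \<le> \<theta> * (w i * cmod (hP i))"
        proof (cases "i \<in> \<Delta>")
          case True thus ?thesis by (simp add: hP_def)
        next
          case False
          have "cmod (\<xi> i) * cmod (hP i) \<le> (\<theta> * w i) * cmod (hP i)"
            by (rule mult_right_mono[OF \<xi>O[OF False]]) simp
          thus ?thesis by (simp add: mult_ac)
        qed
      qed
      also have "\<dots> = \<theta> * (\<Sum>i<M. w i * cmod (hP i))" by (simp add: sum_distrib_left)
      also have "\<dots> \<le> \<theta> * T" unfolding T_def wnorm_def
        using \<theta> by (intro mult_left_mono sum_le_suminf[OF hPs]) (auto simp: w0)
      finally show ?thesis .
    qed
    thus ?thesis by (intro LIMSEQ_le_const2[OF lim]) auto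
  qed
  have IpB: "- Re Ip \<le> C3 * sqrt s * (2 * \<eta>) + \<theta> * T"
  proof -
    have "- Re Ip \<le> cmod Ip" by (metis abs_Re_le_cmod abs_le_iff)
    also have "\<dots> \<le> cmod (\<Sum>n<N. cnj (b n) * q n) + cmod (\<Sum>n<N. cnj (b n) * p n)"
      unfolding Ip_eq by (rule norm_triangle_ineq4)
    finally show ?thesis using Iq Ipn by linarith
  qed
  define xP where "xP = (\<lambda>i. if i \<in> \<Delta> then 0 else x i)"
  define Xp where "Xp = wnorm w xP"
  define Wd where "Wd = wnorm w (\<lambda>i. x i - xbar i)"
  define xhP where "xhP = (\<lambda>i. if i \<in> \<Delta> then 0 else xhat i)"
  have xPs: "summable (\<lambda>i. w i * cmod (xP i))"
    by (rule summable_comparison_test[OF _ xs]) (use w0 in \<open>auto simp: xP_def\<close>)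
  have xhPs: "summable (\<lambda>i. w i * cmod (xhP i))"
    by (rule summable_comparison_test[OF _ xhs]) (use w0 in \<open>auto simp: xhP_def\<close>)
  have xxbs: "summable (\<lambda>i. w i * cmod (x i - xbar i))"
  proof (rule summable_comparison_test[OF _ summable_add[OF xs xbs]])
    show "\<exists>N. \<forall>n\<ge>N. norm (w n * cmod (x n - xbar n)) \<le> w n * cmod (x n) + w n * cmod (xbar n)"
    proof (intro exI allI impI)
      fix n :: nat
      have "w n * cmod (x n - xbar n) \<le> w n * (cmod (x n) + cmod (xbar n))"
        by (intro mult_left_mono norm_triangle_ineq4 w0)
      thus "norm (w n * cmod (x n - xbar n)) \<le> w n * cmod (x n) + w n * cmod (xbar n)"
        using w0[of n] by (simp add: distrib_left)
    qed
  qed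
  have split: "wnorm w z = (\<Sum>i\<in>\<Delta>. w i * cmod (z i)) + wnorm w (\<lambda>i. if i \<in> \<Delta> then 0 else z i)"
    if zs: "summable (\<lambda>i. w i * cmod (z i))" for z
  proof -
    have s2: "summable (\<lambda>i. w i * cmod (if i \<in> \<Delta> then 0 else z i))"
      by (rule summable_comparison_test[OF _ zs]) (use w0 in auto)
    have s1: "(\<lambda>i. if i \<in> \<Delta> then w i * cmod (z i) else 0) sums (\<Sum>i\<in>\<Delta>. if i \<in> \<Delta> then w i * cmod (z i) else 0)"
      by (rule sums_finite[OF fin]) auto
    have "(\<lambda>i. (if i \<in> \<Delta> then w i * cmod (z i) else 0) + w i * cmod (if i \<in> \<Delta> then 0 else z i))
          sums ((\<Sum>i\<in>\<Delta>. if i \<in> \<Delta> then w i * cmod (z i) else 0) + wnorm w (\<lambda>i. if i \<in> \<Delta> then 0 else z i))"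
      unfolding wnorm_def by (rule sums_add[OF s1 summable_sums[OF s2]])
    moreover have "(\<lambda>i. (if i \<in> \<Delta> then w i * cmod (z i) else 0) + w i * cmod (if i \<in> \<Delta> then 0 else z i))
          = (\<lambda>i. w i * cmod (z i))" by auto
    ultimately show ?thesis unfolding wnorm_def by (simp add: sums_iff)
  qed
  have A1: "wnorm w xhat \<le> wnorm w xbar"
  proof -
    define z where "z = (\<lambda>i. if i < K then xbar i else 0)"
    have "UPK U K z = UPK U K xbar" unfolding UPK_def z_def by (intro ext sum.cong) auto
    hence "wnorm w xhat \<le> wnorm w z" using xhat_min xbar_feas by (simp add: z_def)
    also have "wnorm w z \<le> wnorm w xbar" unfolding wnorm_def
    proof (rule suminf_le)
      show "summable (\<lambda>i. w i * cmod (z i))" by (rule summable_finite[of "{..<K}"]) (auto simp: z_def)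
      show "summable (\<lambda>i. w i * cmod (xbar i))" by (rule xbs)
      show "w i * cmod (z i) \<le> w i * cmod (xbar i)" for i using w0[of i] by (auto simp: z_def)
    qed
    finally show ?thesis .
  qed
  have A2: "wnorm w xbar \<le> wnorm w x + Wd"
  proof -
    have "wnorm w xbar \<le> (\<Sum>i. w i * cmod (x i) + w i * cmod (x i - xbar i))" unfolding wnorm_def
    proof (rule suminf_le)
      show "summable (\<lambda>i. w i * cmod (xbar i))" by (rule xbs)
      show "summable (\<lambda>i. w i * cmod (x i) + w i * cmod (x i - xbar i))" by (rule summable_add[OF xs xxbs])
      fix i
      have "cmod (xbar i) \<le> cmod (x i) + cmod (x i - xbar i)"
        using norm_triangle_ineq4[of "x i" "x i - xbar i"] by simp
      hence "w i * cmod (xbar i) \<le> w i * (cmod (x i) + cmod (x i - xbar i))" by (intro mult_left_mono w0)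
      thus "w i * cmod (xbar i) \<le> w i * cmod (x i) + w i * cmod (x i - xbar i)" by (simp add: distrib_left)
    qed
    also have "\<dots> = wnorm w x + Wd" unfolding wnorm_def Wd_def by (simp add: suminf_add[OF xs xxbs])
    finally show ?thesis .
  qed
  have A3: "wnorm w x = (\<Sum>i\<in>\<Delta>. w i * cmod (x i)) + Xp" unfolding Xp_def xP_def by (rule split[OF xs])
  have A4: "wnorm w xhat = (\<Sum>i\<in>\<Delta>. w i * cmod (xhat i)) + wnorm w xhP" unfolding xhP_def by (rule split[OF xhs])
  have A5: "T \<le> wnorm w xhP + Xp"
  proof -
    have "T \<le> (\<Sum>i. w i * cmod (xhP i) + w i * cmod (xP i))" unfolding T_def wnorm_def
    proof (rule suminf_le)
      show "summable (\<lambda>i. w i * cmod (hP i))" by (rule hPs)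
      show "summable (\<lambda>i. w i * cmod (xhP i) + w i * cmod (xP i))" by (rule summable_add[OF xhPs xPs])
      fix i
      have "cmod (hP i) \<le> cmod (xhP i) + cmod (xP i)"
        unfolding hP_def xhP_def xP_def h_def by (auto intro: norm_triangle_ineq4)
      hence "w i * cmod (hP i) \<le> w i * (cmod (xhP i) + cmod (xP i))" by (intro mult_left_mono w0)
      thus "w i * cmod (hP i) \<le> w i * cmod (xhP i) + w i * cmod (xP i)" by (simp add: distrib_left)
    qed
    also have "\<dots> = wnorm w xhP + Xp" unfolding wnorm_def Xp_def by (simp add: suminf_add[OF xhPs xPs])
    finally show ?thesis .
  qed
  have A6: "(\<Sum>i\<in>\<Delta>. w i * cmod (x i)) + Re Ip \<le> (\<Sum>i\<in>\<Delta>. w i * cmod (xhat i))"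
  proof -
    have e1: "(\<Sum>i\<in>\<Delta>. cnj (g i) * xhat i) = complex_of_real (\<Sum>i\<in>\<Delta>. w i * cmod (x i)) + Ip"
    proof -
      have "(\<Sum>i\<in>\<Delta>. cnj (g i) * xhat i) = (\<Sum>i\<in>\<Delta>. cnj (g i) * x i + cnj (g i) * h i)"
        by (intro sum.cong) (auto simp: h_def algebra_simps)
      also have "\<dots> = (\<Sum>i\<in>\<Delta>. cnj (g i) * x i) + Ip" by (simp add: sum.distrib Ip_def)
      also have "(\<Sum>i\<in>\<Delta>. cnj (g i) * x i) = (\<Sum>i\<in>\<Delta>. complex_of_real (w i * cmod (x i)))"
      proof (rule sum.cong)
        fix i assume "i \<in> \<Delta>"
        hence "cnj (g i) * x i = complex_of_real (w i) * (cnj (sgn (x i)) * x i)" by (simp add: g_def mult_ac)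
        also have "\<dots> = complex_of_real (w i * cmod (x i))" by (simp add: cnj_sgn_mult)
        finally show "cnj (g i) * x i = complex_of_real (w i * cmod (x i))" .
      qed simp
      finally show ?thesis by simp
    qed
    have "Re (\<Sum>i\<in>\<Delta>. cnj (g i) * xhat i) \<le> (\<Sum>i\<in>\<Delta>. w i * cmod (xhat i))"
      unfolding Re_sum
    proof (rule sum_mono)
      fix i assume "i \<in> \<Delta>"
      have "Re (cnj (g i) * xhat i) \<le> cmod (cnj (g i) * xhat i)" by (rule complex_Re_le_cmod)
      also have "\<dots> = cmod (g i) * cmod (xhat i)" by (simp add: norm_mult)
      also have "\<dots> \<le> w i * cmod (xhat i)"
      proof (rule mult_right_mono)
        show "cmod (g i) \<le> w i" using \<open>i \<in> \<Delta>\<close> w0[of i]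
          by (auto simp: g_def norm_mult norm_sgn intro: mult_left_le)
      qed simp
      finally show "Re (cnj (g i) * xhat i) \<le> w i * cmod (xhat i)" .
    qed
    thus ?thesis unfolding e1 by simp
  qed
  have Tb: "(1 - \<theta>) * T \<le> 2 * Xp + Wd + C3 * sqrt s * (2 * \<eta>)"
    using A1 A2 A3 A4 A5 A6 IpB by (simp add: algebra_simps)
  define hD where "hD = (\<lambda>i. if i \<in> \<Delta> then h i else 0)"
  have hDs: "\<And>i. i \<notin> \<Delta> \<Longrightarrow> hD i = 0" by (simp add: hD_def)
  have UvhD: "Uv U \<Delta> hD = Uv U \<Delta> h" unfolding Uv_def hD_def by (intro ext sum.cong) auto
  have hDn: "nD \<Delta> h \<le> C3 * (2 * \<eta> + T)"
  proof -
    have "(1 - \<alpha>) * nD \<Delta> hD \<le> nD \<Delta> (Aop U N \<Delta> hD)" by (rule S.K1b) (rule hDs)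
    also have "nD \<Delta> (Aop U N \<Delta> hD) = nD \<Delta> (\<lambda>i. if i \<in> \<Delta> then (\<Sum>n<N. cnj (U n i) * Uv U \<Delta> h n) else 0)"
      by (rule nD_cong) (simp add: Aop_Uv UvhD)
    also have "\<dots> \<le> sqrt (1 + \<alpha>) * vnorm N (Uv U \<Delta> h)" by (rule S.K3)
    also have "\<dots> \<le> sqrt (1 + \<alpha>) * (2 * \<eta> + T)"
    proof (rule mult_left_mono)
      have "vnorm N (Uv U \<Delta> h) = nD {..<N} (\<lambda>n. q n - p n)" unfolding vnorm_nD
        by (rule nD_cong) (simp add: Uvh)
      also have "\<dots> \<le> nD {..<N} q + nD {..<N} p" by (rule nD_diff)
      also have "\<dots> \<le> 2 * \<eta> + T" using qn pn by (simp add: vnorm_nD)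
      finally show "vnorm N (Uv U \<Delta> h) \<le> 2 * \<eta> + T" .
    qed (use \<alpha> in simp)
    finally have "(1 - \<alpha>) * nD \<Delta> hD \<le> sqrt (1 + \<alpha>) * (2 * \<eta> + T)" .
    moreover have "nD \<Delta> hD = nD \<Delta> h" by (rule nD_cong) (simp add: hD_def)
    ultimately have "nD \<Delta> h \<le> sqrt (1 + \<alpha>) * (2 * \<eta> + T) / (1 - \<alpha>)"
      using \<alpha> by (simp add: pos_le_divide_eq mult.commute)
    thus ?thesis by (simp add: C3_def)
  qed
  have l2b: "l2norm h \<le> nD \<Delta> h + T"
  proof -
    have sqb: "(cmod (hP i))\<^sup>2 \<le> T * (w i * cmod (hP i))" for i
    proof -
      have c1: "cmod (hP i) \<le> w i * cmod (hP i)" using w1[of i] by (simp add: mult_le_cancel_right1)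
      have "cmod (hP i) * cmod (hP i) \<le> (w i * cmod (hP i)) * (w i * cmod (hP i))"
        by (rule mult_mono[OF c1 c1]) (use w0[of i] in auto)
      hence "(cmod (hP i))\<^sup>2 \<le> (w i * cmod (hP i)) * (w i * cmod (hP i))"
        by (simp only: power2_eq_square)
      also have "\<dots> \<le> T * (w i * cmod (hP i))"
        using hPle[of i] w0[of i] by (intro mult_right_mono) auto
      finally show ?thesis .
    qed
    have s2: "summable (\<lambda>i. (cmod (hP i))\<^sup>2)"
      by (rule summable_comparison_test[OF _ summable_mult[OF hPs, of T]]) (use sqb in auto)
    have sum2: "(\<Sum>i. (cmod (hP i))\<^sup>2) \<le> T * T"
    proof -
      have "(\<Sum>i. (cmod (hP i))\<^sup>2) \<le> (\<Sum>i. T * (w i * cmod (hP i)))"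
        by (rule suminf_le[OF sqb s2 summable_mult[OF hPs]])
      also have "\<dots> = T * T" by (simp add: suminf_mult[OF hPs] T_def wnorm_def)
      finally show ?thesis .
    qed
    have s1: "(\<lambda>i. if i \<in> \<Delta> then (cmod (h i))\<^sup>2 else 0) sums (\<Sum>i\<in>\<Delta>. if i \<in> \<Delta> then (cmod (h i))\<^sup>2 else 0)"
      by (rule sums_finite[OF fin]) auto
    have "(\<lambda>i. (if i \<in> \<Delta> then (cmod (h i))\<^sup>2 else 0) + (cmod (hP i))\<^sup>2) sums
          ((\<Sum>i\<in>\<Delta>. if i \<in> \<Delta> then (cmod (h i))\<^sup>2 else 0) + (\<Sum>i. (cmod (hP i))\<^sup>2))"
      by (rule sums_add[OF s1 summable_sums[OF s2]])
    moreover have "(\<lambda>i. (if i \<in> \<Delta> then (cmod (h i))\<^sup>2 else 0) + (cmod (hP i))\<^sup>2) = (\<lambda>i. (cmod (h i))\<^sup>2)"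
      by (auto simp: hP_def)
    ultimately have "(\<Sum>i. (cmod (h i))\<^sup>2) = (nD \<Delta> h)\<^sup>2 + (\<Sum>i. (cmod (hP i))\<^sup>2)"
      by (simp add: sums_iff nD_sq)
    also have "\<dots> \<le> (nD \<Delta> h)\<^sup>2 + T\<^sup>2" using sum2 by (simp add: power2_eq_square)
    also have "\<dots> \<le> (nD \<Delta> h + T)\<^sup>2"
    proof -
      have "0 \<le> 2 * nD \<Delta> h * T" using T0 nD_nonneg[of \<Delta> h] by simp
      thus ?thesis unfolding power2_sum by linarith
    qed
    finally have "sqrt (\<Sum>i. (cmod (h i))\<^sup>2) \<le> sqrt ((nD \<Delta> h + T)\<^sup>2)" by (rule real_sqrt_le_mono)
    thus ?thesis using T0 nD_nonneg[of \<Delta> h] by (simp add: l2norm_def)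
  qed
  have main: "l2norm h \<le> 2 * C3 * \<eta> + (C3 + 1) * ((2 * Xp + Wd + C3 * sqrt s * (2 * \<eta>)) / (1 - \<theta>))"
  proof -
    have "T \<le> (2 * Xp + Wd + C3 * sqrt s * (2 * \<eta>)) / (1 - \<theta>)"
      using Tb \<theta> by (simp add: pos_le_divide_eq mult.commute)
    hence "(C3 + 1) * T \<le> (C3 + 1) * ((2 * Xp + Wd + C3 * sqrt s * (2 * \<eta>)) / (1 - \<theta>))"
      using C30 by (intro mult_left_mono) auto
    thus ?thesis using l2b hDn by (simp add: algebra_simps)
  qed
  define k where "k = (C3 + 1) / (1 - \<theta>)"
  define B where "B = 2 * Xp + Wd + C3 * sqrt s * (2 * \<eta>)"
  have kB: "(C3 + 1) * (B / (1 - \<theta>)) = k * B" unfolding k_def by simp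
  have e: "2 * C3 * \<eta> + k * B = 2 * C3 * (1 + k * sqrt s) * \<eta> + k * (2 * Xp + Wd)"
    unfolding B_def by (simp add: algebra_simps)
  have "l2norm h \<le> 2 * C3 * \<eta> + (C3 + 1) * (B / (1 - \<theta>))" using main unfolding B_def .
  hence "l2norm h \<le> 2 * C3 * (1 + k * sqrt s) * \<eta> + k * (2 * Xp + Wd)" unfolding kB e .
  thus ?thesis unfolding h_def k_def C3_def s_def Xp_def xP_def Wd_def by simp
qed


end
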